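(* Let $d>1$ and $n\ge d$ be integers. For every $A\subseteq\mathbb{F}_2^n$, \[\lambda^*(n,d,2^{d-1},A)\le 1-\frac{\binom{n-1}{d}_2}{\binom{n}{d}_2}.\] Moreover, equality holds when $A=\{x\in\mathbb{F}_2^n:\sum_{i=1}^n x_i=0\}$, and consequently $\lambda^*(d,2^{d-1})=1-2^{-d}$.
   Context: For integers $n\ge d\ge 1$, a $d$-flat in $\mathbb{F}_2^n$ is a set $x_0+U$ with $x_0\in\mathbb{F}_2^n$ and $U$ a $d$-dimensional linear subspace of $\mathbb{F}_2^n$. For $A\subseteq\mathbb{F}_2^n$ and an integer $0\le s\le 2^d$, $\lambda^*(n,d,s,A)$ denotes the fraction of $d$-flats $Q$ in $\mathbb{F}_2^n$ with $|Q\cap A|=s$. Let $\lambda^*(n,d,s)=\max_{A}\lambda^*(n,d,s,A)$ and $\lambda^*(d,s)=\lim_{n\to\infty}\lambda^*(n,d,s)$. The Gaussian binomial coefficient is $\binom{n}{d}_2=\prod_{i=0}^{d-1}\frac{2^{n-i}-1}{2^{d-i}-1}$, the number of $d$-dimensional linear subspaces of $\mathbb{F}_2^n$. *)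

theory Defs
  imports Complex_Main "HOL-Library.Z2"
begin

text \<open>Vectors of F_2^n are functions nat => bit vanishing outside {0..<n}.\<close>

definition Fvec :: "nat \<Rightarrow> (nat \<Rightarrow> bit) set" where
  "Fvec n = {x. \<forall>i\<ge>n. x i = 0}"

definition vadd :: "(nat \<Rightarrow> bit) \<Rightarrow> (nat \<Rightarrow> bit) \<Rightarrow> (nat \<Rightarrow> bit)" where
  "vadd x y = (\<lambda>i. x i + y i)"

definition vsum :: "(nat \<Rightarrow> bit) set \<Rightarrow> (nat \<Rightarrow> bit)" where
  "vsum S = (\<lambda>i. \<Sum>v\<in>S. v i)"

text \<open>U is a d-dimensional linear subspace of F_2^n: it has a basis B of d vectors,
  i.e. B is linearly independent (distinct subsets have distinct sums; over F_2 the
  linear combinations of B are exactly the subset sums) and U is the span of B.\<close>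
definition is_subspace_dim :: "nat \<Rightarrow> nat \<Rightarrow> (nat \<Rightarrow> bit) set \<Rightarrow> bool" where
  "is_subspace_dim n d U \<longleftrightarrow>
     (\<exists>B. B \<subseteq> Fvec n \<and> finite B \<and> card B = d \<and> inj_on vsum (Pow B) \<and> U = vsum ` Pow B)"

definition is_flat :: "nat \<Rightarrow> nat \<Rightarrow> (nat \<Rightarrow> bit) set \<Rightarrow> bool" where
  "is_flat n d Q \<longleftrightarrow>
     (\<exists>x0 U. x0 \<in> Fvec n \<and> is_subspace_dim n d U \<and> Q = vadd x0 ` U)"

definition lambda_star_A :: "nat \<Rightarrow> nat \<Rightarrow> nat \<Rightarrow> (nat \<Rightarrow> bit) set \<Rightarrow> real" where
  "lambda_star_A n d s A =
     real (card {Q. is_flat n d Q \<and> card (Q \<inter> A) = s}) / real (card {Q. is_flat n d Q})"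

definition lambda_star_n :: "nat \<Rightarrow> nat \<Rightarrow> nat \<Rightarrow> real" where
  "lambda_star_n n d s = Max ((\<lambda>A. lambda_star_A n d s A) ` Pow (Fvec n))"

definition lambda_star :: "nat \<Rightarrow> nat \<Rightarrow> real" where
  "lambda_star d s = lim (\<lambda>n. lambda_star_n n d s)"

definition gauss_binom :: "nat \<Rightarrow> nat \<Rightarrow> real" where
  "gauss_binom n d = (\<Prod>i<d. (2 ^ (n - i) - 1) / (2 ^ (d - i) - 1))"

end

theory Submission
  imports Defs
begin

declare add_bit_eq_xor[simp del] mult_bit_eq_and[simp del]

definition zv :: "nat \<Rightarrow> bit" where "zv = (\<lambda>_. 0)"

lemma bit_add_self[simp]: "(a::bit) + a = 0"
  by (cases a) simp_all

lemma vadd_comm: "vadd x y = vadd y x"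
  unfolding vadd_def by (auto simp: add.commute)

lemma vadd_assoc: "vadd (vadd x y) z = vadd x (vadd y z)"
  unfolding vadd_def by (auto simp: add.assoc)

lemma vadd_self[simp]: "vadd x x = zv"
  unfolding vadd_def zv_def by auto

lemma vadd_zv[simp]: "vadd x zv = x" "vadd zv x = x"
  unfolding vadd_def zv_def by auto

lemma vadd_cancel[simp]: "vadd (vadd x y) y = x" "vadd x (vadd x y) = y"
  by (simp add: vadd_assoc, simp flip: vadd_assoc)

lemma vadd_inj: "inj (vadd x)"
  by (metis injI vadd_cancel(2))

lemma Fvec_vadd[intro]: "x \<in> Fvec n \<Longrightarrow> y \<in> Fvec n \<Longrightarrow> vadd x y \<in> Fvec n"
  unfolding Fvec_def vadd_def by auto

lemma Fvec_zv[simp]: "zv \<in> Fvec n"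
  unfolding Fvec_def zv_def by auto

lemma Fvec_Suc: "Fvec (Suc n) = Fvec n \<union> (\<lambda>x. x(n := 1)) ` Fvec n"
proof
  show "Fvec (Suc n) \<subseteq> Fvec n \<union> (\<lambda>x. x(n := 1)) ` Fvec n"
  proof
    fix x assume x: "x \<in> Fvec (Suc n)"
    show "x \<in> Fvec n \<union> (\<lambda>x. x(n := 1)) ` Fvec n"
    proof (cases "x n = 0")
      case True
      have "x i = 0" if "n \<le> i" for i
        using x True that by (cases "i = n") (auto simp: Fvec_def)
      then have "x \<in> Fvec n" unfolding Fvec_def by auto
      then show ?thesis by simp
    next
      case False
      then have "x n = 1" by simp
      then have "x = (x(n:=0))(n:=1)" by auto
      moreover have "x(n:=0) \<in> Fvec n" using x unfolding Fvec_def
        by (auto simp: Suc_le_eq)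
      ultimately show ?thesis by blast
    qed
  qed
  show "Fvec n \<union> (\<lambda>x. x(n := 1)) ` Fvec n \<subseteq> Fvec (Suc n)"
    unfolding Fvec_def by auto
qed

lemma Fvec_finite_card: "finite (Fvec n) \<and> card (Fvec n) = 2 ^ n"
proof (induction n)
  case 0
  have "Fvec 0 = {zv}" unfolding Fvec_def zv_def by auto
  then show ?case by simp
next
  case (Suc n)
  have disj: "Fvec n \<inter> (\<lambda>x. x(n := 1)) ` Fvec n = {}"
    unfolding Fvec_def by auto
  have inj: "inj_on (\<lambda>x. x(n := 1)) (Fvec n)"
  proof (rule inj_onI)
    fix x y assume xy: "x \<in> Fvec n" "y \<in> Fvec n" and eq: "x(n := 1) = y(n := 1)"
    show "x = y"
    proof (rule ext)
      fix i show "x i = y i"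
        using xy fun_cong[OF eq, of i] by (cases "i = n") (auto simp: Fvec_def)
    qed
  qed
  have "card (Fvec (Suc n)) = card (Fvec n) + card ((\<lambda>x. x(n := 1)) ` Fvec n)"
    unfolding Fvec_Suc using Suc disj by (simp add: card_Un_disjoint)
  also have "\<dots> = 2 ^ Suc n" using Suc card_image[OF inj] by simp
  finally show ?case using Suc by (simp add: Fvec_Suc)
qed

lemma finite_Fvec[simp]: "finite (Fvec n)" and card_Fvec: "card (Fvec n) = 2 ^ n"
  using Fvec_finite_card by auto

lemma vsum_empty[simp]: "vsum {} = zv"
  unfolding vsum_def zv_def by simp

lemma vsum_insert: "finite S \<Longrightarrow> a \<notin> S \<Longrightarrow> vsum (insert a S) = vadd a (vsum S)"
  unfolding vsum_def vadd_def by simp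

lemma vsum_Fvec: "finite S \<Longrightarrow> S \<subseteq> Fvec n \<Longrightarrow> vsum S \<in> Fvec n"
  by (induction S rule: finite_induct) (auto simp: vsum_insert)

lemma vsum_symdiff:
  assumes "finite S1" "finite S2"
  shows "vadd (vsum S1) (vsum S2) = vsum ((S1 - S2) \<union> (S2 - S1))"
proof -
  have "vadd (vsum S1) (vsum S2) i = vsum ((S1 - S2) \<union> (S2 - S1)) i" for i
  proof -
    have e1: "(\<Sum>v\<in>S1. v i) = (\<Sum>v\<in>S1 - S2. v i) + (\<Sum>v\<in>S1 \<inter> S2. v i)"
      using assms(1) sum.Int_Diff[of S1 _ S2] by (simp add: add.commute)
    have e2: "(\<Sum>v\<in>S2. v i) = (\<Sum>v\<in>S2 - S1. v i) + (\<Sum>v\<in>S1 \<inter> S2. v i)"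
      using assms(2) sum.Int_Diff[of S2 _ S1] by (simp add: add.commute Int_commute)
    have e3: "(\<Sum>v\<in>(S1 - S2) \<union> (S2 - S1). v i) = (\<Sum>v\<in>S1 - S2. v i) + (\<Sum>v\<in>S2 - S1. v i)"
      using assms by (intro sum.union_disjoint) auto
    have "vadd (vsum S1) (vsum S2) i = (\<Sum>v\<in>S1. v i) + (\<Sum>v\<in>S2. v i)"
      unfolding vadd_def vsum_def by simp
    also have "\<dots> = (\<Sum>v\<in>S1 - S2. v i) + (\<Sum>v\<in>S2 - S1. v i)
        + ((\<Sum>v\<in>S1 \<inter> S2. v i) + (\<Sum>v\<in>S1 \<inter> S2. v i))"
      unfolding e1 e2 by (simp only: ac_simps)
    also have "\<dots> = vsum ((S1 - S2) \<union> (S2 - S1)) i"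
      unfolding vsum_def e3 by (simp only: bit_add_self add_0_right)
    finally show ?thesis .
  qed
  then show ?thesis by (rule ext)
qed

definition Subs :: "nat \<Rightarrow> nat \<Rightarrow> (nat \<Rightarrow> bit) set set" where
  "Subs n d = {U. is_subspace_dim n d U}"

definition Flats :: "nat \<Rightarrow> nat \<Rightarrow> (nat \<Rightarrow> bit) set set" where
  "Flats n d = {Q. is_flat n d Q}"

definition fl :: "(nat \<Rightarrow> bit) \<times> (nat \<Rightarrow> bit) set \<Rightarrow> (nat \<Rightarrow> bit) set" where
  "fl p = vadd (fst p) ` snd p"

lemma subspace_props:
  assumes "U \<in> Subs n d"
  shows "U \<subseteq> Fvec n" "finite U" "card U = 2 ^ d" "zv \<in> U"
    "\<And>x y. x \<in> U \<Longrightarrow> y \<in> U \<Longrightarrow> vadd x y \<in> U"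
proof -
  obtain B where B: "B \<subseteq> Fvec n" "finite B" "card B = d" "inj_on vsum (Pow B)" "U = vsum ` Pow B"
    using assms unfolding Subs_def is_subspace_dim_def by auto
  show "U \<subseteq> Fvec n" using B by (auto intro!: vsum_Fvec dest: finite_subset)
  show "finite U" using B by simp
  show "card U = 2 ^ d" using B by (simp add: card_image card_Pow)
  show "zv \<in> U" using B by (auto intro!: image_eqI[where x="{}"])
  fix x y assume "x \<in> U" "y \<in> U"
  then obtain S1 S2 where "S1 \<subseteq> B" "S2 \<subseteq> B" "x = vsum S1" "y = vsum S2" using B by auto
  then show "vadd x y \<in> U" using B vsum_symdiff[of S1 S2]
    by (auto dest: finite_subset)
qed

lemma finite_Subs[simp]: "finite (Subs n d)"
proof -
  have "Subs n d \<subseteq> Pow (Fvec n)" using subspace_props(1) by blast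
  then show ?thesis by (rule finite_subset) simp
qed

lemma shift_closed:
  assumes "\<And>x y. x \<in> U \<Longrightarrow> y \<in> U \<Longrightarrow> vadd x y \<in> U" "u \<in> U"
  shows "vadd u ` U = U"
proof
  show "vadd u ` U \<subseteq> U" using assms by auto
  show "U \<subseteq> vadd u ` U"
  proof
    fix y assume "y \<in> U"
    then have "y = vadd u (vadd u y)" "vadd u y \<in> U" using assms by auto
    then show "y \<in> vadd u ` U" by blast
  qed
qed

lemma Flats_eq: "Flats n d = fl ` (Fvec n \<times> Subs n d)"
  unfolding Flats_def is_flat_def fl_def Subs_def by force

lemma finite_Flats[simp]: "finite (Flats n d)"
  unfolding Flats_eq by simp

lemma fiber:
  assumes "x0 \<in> Fvec n" "U0 \<in> Subs n d"
  shows "{p \<in> Fvec n \<times> Subs n d. fl p = fl (x0, U0)} = (\<lambda>x. (x, U0)) ` fl (x0, U0)"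
proof -
  note P = subspace_props[OF assms(2)]
  have rep: "fl (x, U0) = fl (x0, U0)" if "x \<in> fl (x0, U0)" for x
  proof -
    have "x \<in> vadd x0 ` U0" using that by (simp add: fl_def)
    then obtain u where u: "u \<in> U0" "x = vadd x0 u" by blast
    have "fl (x, U0) = vadd x0 ` (vadd u ` U0)" by (simp add: fl_def u image_image vadd_assoc)
    also have "\<dots> = fl (x0, U0)" unfolding fl_def using shift_closed[OF P(5) u(1)] by simp
    finally show ?thesis .
  qed
  have sub: "fl (x0, U0) \<subseteq> Fvec n" unfolding fl_def using P(1) assms(1) by auto
  show ?thesis
  proof
    show "{p \<in> Fvec n \<times> Subs n d. fl p = fl (x0, U0)} \<subseteq> (\<lambda>x. (x, U0)) ` fl (x0, U0)"
    proof
      fix p assume p: "p \<in> {p \<in> Fvec n \<times> Subs n d. fl p = fl (x0, U0)}"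
      obtain x U where xU: "p = (x, U)" "x \<in> Fvec n" "U \<in> Subs n d" "fl (x, U) = fl (x0, U0)"
        using p by auto
      have "x \<in> fl (x, U)" unfolding fl_def using subspace_props(4)[OF xU(3)]
        by (auto intro!: image_eqI[where x=zv])
      then have x: "x \<in> fl (x0, U0)" using xU by simp
      have "vadd x ` U = vadd x ` U0" using rep[OF x] xU(4) unfolding fl_def by simp
      then have "U = U0" using vadd_inj by (simp add: inj_image_eq_iff)
      then show "p \<in> (\<lambda>x. (x, U0)) ` fl (x0, U0)" using xU x by auto
    qed
    show "(\<lambda>x. (x, U0)) ` fl (x0, U0) \<subseteq> {p \<in> Fvec n \<times> Subs n d. fl p = fl (x0, U0)}"
    proof
      fix q assume "q \<in> (\<lambda>x. (x, U0)) ` fl (x0, U0)"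
      then obtain x where x: "x \<in> fl (x0, U0)" "q = (x, U0)" by blast
      have "x \<in> Fvec n" using sub x(1) by blast
      then show "q \<in> {p \<in> Fvec n \<times> Subs n d. fl p = fl (x0, U0)}"
        using rep[OF x(1)] x(2) assms(2) by simp
    qed
  qed
qed

lemma card_fl:
  assumes "x0 \<in> Fvec n" "U0 \<in> Subs n d"
  shows "card (fl (x0, U0)) = 2 ^ d"
  unfolding fl_def using subspace_props(3)[OF assms(2)]
  by (simp add: card_image inj_on_subset[OF vadd_inj])

lemma count_pairs:
  "card {p \<in> Fvec n \<times> Subs n d. P (fl p)} = card {Q \<in> Flats n d. P Q} * 2 ^ d"
proof -
  define F where "F Q = {p \<in> Fvec n \<times> Subs n d. fl p = Q}" for Q
  have eq: "{p \<in> Fvec n \<times> Subs n d. P (fl p)} = (\<Union>Q\<in>{Q \<in> Flats n d. P Q}. F Q)"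
  proof (rule set_eqI, rule iffI)
    fix p assume "p \<in> {p \<in> Fvec n \<times> Subs n d. P (fl p)}"
    then have p: "p \<in> Fvec n \<times> Subs n d" "P (fl p)" by auto
    then have "p \<in> F (fl p)" unfolding F_def by simp
    moreover have "fl p \<in> Flats n d" unfolding Flats_eq using p(1) by (rule imageI)
    ultimately have "p \<in> F (fl p)" "fl p \<in> {Q \<in> Flats n d. P Q}" using p(2) by auto
    then show "p \<in> (\<Union>Q\<in>{Q \<in> Flats n d. P Q}. F Q)" by blast
  next
    fix p assume "p \<in> (\<Union>Q\<in>{Q \<in> Flats n d. P Q}. F Q)"
    then obtain Q where "Q \<in> {Q \<in> Flats n d. P Q}" "p \<in> F Q" by blast
    then show "p \<in> {p \<in> Fvec n \<times> Subs n d. P (fl p)}" unfolding F_def by simp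
  qed
  have cF: "card (F Q) = 2 ^ d" if "Q \<in> Flats n d" for Q
  proof -
    have "Q \<in> fl ` (Fvec n \<times> Subs n d)" using that Flats_eq by simp
    then obtain p where p2: "Q = fl p" and p1: "p \<in> Fvec n \<times> Subs n d" by (rule imageE)
    note p = p1 p2
    obtain x0 U0 where pe: "p = (x0, U0)" by (cases p)
    have x0: "x0 \<in> Fvec n" and U0: "U0 \<in> Subs n d" using p(1) pe by auto
    have Q: "Q = fl (x0, U0)" using p(2) pe by simp
    have "F Q = (\<lambda>x. (x, U0)) ` fl (x0, U0)" unfolding F_def Q by (rule fiber[OF x0 U0])
    moreover have "inj_on (\<lambda>x. (x, U0)) (fl (x0, U0))" by (rule inj_onI) simp
    ultimately have "card (F Q) = card (fl (x0, U0))" by (simp add: card_image)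
    also have "\<dots> = 2 ^ d" by (rule card_fl[OF x0 U0])
    finally show ?thesis .
  qed
  have "card (\<Union>Q\<in>{Q \<in> Flats n d. P Q}. F Q) = (\<Sum>Q\<in>{Q \<in> Flats n d. P Q}. card (F Q))"
  proof (rule card_UN_disjoint)
    show "finite {Q \<in> Flats n d. P Q}" by simp
    show "\<forall>i\<in>{Q \<in> Flats n d. P Q}. finite (F i)" unfolding F_def
      by (auto intro: finite_subset[of _ "Fvec n \<times> Subs n d"])
    show "\<forall>i\<in>{Q \<in> Flats n d. P Q}. \<forall>j\<in>{Q \<in> Flats n d. P Q}. i \<noteq> j \<longrightarrow> F i \<inter> F j = {}"
      unfolding F_def by auto
  qed
  also have "\<dots> = (\<Sum>Q\<in>{Q \<in> Flats n d. P Q}. 2 ^ d)"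
    by (rule sum.cong) (auto simp: cF)
  also have "\<dots> = card {Q \<in> Flats n d. P Q} * 2 ^ d" by simp
  finally show ?thesis unfolding eq .
qed


lemma inj_vsum_ex:
  assumes "finite S" "T zv = zv" "\<And>x y. T (vadd x y) = vadd (T x) (T y)" "inj T"
  shows "T (vsum S) = vsum (T ` S)"
  using assms(1)
proof (induction S rule: finite_induct)
  case empty
  then show ?case using assms(2) by simp
next
  case (insert a S)
  have "T a \<notin> T ` S" using insert(2) assms(4) by (simp add: inj_image_mem_iff)
  then show ?case using insert assms(3) by (simp add: vsum_insert)
qed

lemma subspace_image:
  assumes lin: "\<And>x y. T (vadd x y) = vadd (T x) (T y)" and inv: "\<And>x. T (T x) = x"
    and FT: "\<And>x. x \<in> Fvec n \<Longrightarrow> T x \<in> Fvec n" and U: "U \<in> Subs n d"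
  shows "T ` U \<in> Subs n d"
proof -
  obtain B where B: "B \<subseteq> Fvec n" "finite B" "card B = d" "inj_on vsum (Pow B)" "U = vsum ` Pow B"
    using U unfolding Subs_def is_subspace_dim_def by auto
  have injT: "inj T" by (metis inv injI)
  have Tz: "T zv = zv"
  proof -
    have "T zv = T (vadd zv zv)" by simp
    also have "\<dots> = vadd (T zv) (T zv)" by (rule lin)
    finally show ?thesis by simp
  qed
  have Tv: "T (vsum S) = vsum (T ` S)" if "S \<subseteq> B" for S
    using inj_vsum_ex[OF finite_subset[OF that B(2)] Tz lin injT] .
  have TT: "T ` T ` S = S" for S by (simp add: image_image inv)
  define B' where "B' = T ` B"
  have "B' \<subseteq> Fvec n" using B(1) FT unfolding B'_def by auto
  moreover have "finite B'" using B(2) unfolding B'_def by simp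
  moreover have "card B' = d" using B(3) injT unfolding B'_def by (simp add: card_image inj_on_subset)
  moreover have "inj_on vsum (Pow B')"
  proof (rule inj_onI)
    fix S1 S2 assume S: "S1 \<in> Pow B'" "S2 \<in> Pow B'" and eq: "vsum S1 = vsum S2"
    have sub: "T ` S1 \<subseteq> B" "T ` S2 \<subseteq> B" using S unfolding B'_def by (auto simp: image_image inv)
    have "T (vsum (T ` S1)) = T (vsum (T ` S2))"
      using eq Tv[OF sub(1)] Tv[OF sub(2)] by (simp add: TT)
    then have "vsum (T ` S1) = vsum (T ` S2)" using injT by (simp add: inj_eq)
    then have "T ` S1 = T ` S2" using B(4) sub by (auto simp: inj_on_def)
    then show "S1 = S2" using injT by (simp add: inj_image_eq_iff)
  qed
  moreover have "T ` U = vsum ` Pow B'"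
  proof
    show "T ` U \<subseteq> vsum ` Pow B'"
    proof
      fix y assume "y \<in> T ` U"
      then obtain S where S: "S \<subseteq> B" "y = T (vsum S)" using B(5) by auto
      then have "y = vsum (T ` S)" "T ` S \<in> Pow B'" using Tv unfolding B'_def by auto
      then show "y \<in> vsum ` Pow B'" by blast
    qed
    show "vsum ` Pow B' \<subseteq> T ` U"
    proof
      fix y assume "y \<in> vsum ` Pow B'"
      then obtain S' where S': "S' \<subseteq> B'" "y = vsum S'" by auto
      have sub: "T ` S' \<subseteq> B" using S' unfolding B'_def by (auto simp: image_image inv)
      have "y = T (vsum (T ` S'))" using S' Tv[OF sub] by (simp add: TT)
      moreover have "vsum (T ` S') \<in> U" using B(5) sub by auto
      ultimately show "y \<in> T ` U" by blast
    qed
  qed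
  ultimately have "is_subspace_dim n d (T ` U)" unfolding is_subspace_dim_def
    by (intro exI[of _ B']) simp
  then show ?thesis unfolding Subs_def by simp
qed

lemma exists_phi:
  assumes "w \<noteq> zv" "w' \<noteq> zv"
  shows "\<exists>I. finite I \<and> (\<Sum>i\<in>I. w i) = 1 \<and> (\<Sum>i\<in>I. w' i) = 1"
proof (cases "\<exists>i. w i = 1 \<and> w' i = 1")
  case True
  then obtain i where "w i = 1" "w' i = 1" by blast
  then show ?thesis by (intro exI[of _ "{i}"]) simp
next
  case False
  obtain i where i: "w i = 1" using assms(1) unfolding zv_def by (metis bit_not_zero_iff ext)
  obtain j where j: "w' j = 1" using assms(2) unfolding zv_def by (metis bit_not_zero_iff ext)
  have "w' i = 0"
  proof (rule ccontr)
    assume "w' i \<noteq> 0" then have "w' i = 1" by simp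
    with i False show False by blast
  qed
  have "w j = 0"
  proof (rule ccontr)
    assume "w j \<noteq> 0" then have "w j = 1" by simp
    with j False show False by blast
  qed
  then have "i \<noteq> j" using i by auto
  then show ?thesis using i j \<open>w' i = 0\<close> \<open>w j = 0\<close> by (intro exI[of _ "{i, j}"]) simp
qed

lemma N_sym:
  assumes "w \<in> Fvec n" "w' \<in> Fvec n" "w \<noteq> zv" "w' \<noteq> zv"
  shows "card {U \<in> Subs n d. w \<in> U} = card {U \<in> Subs n d. w' \<in> U}"
proof -
  obtain I where I: "finite I" "(\<Sum>i\<in>I. w i) = 1" "(\<Sum>i\<in>I. w' i) = 1"
    using exists_phi[OF assms(3,4)] by blast
  define phi where "phi x = (\<Sum>i\<in>I. x i)" for x :: "nat \<Rightarrow> bit"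
  define c where "c = vadd w w'"
  define T where "T x = vadd x (\<lambda>i. phi x * c i)" for x
  have phi_add: "phi (vadd x y) = phi x + phi y" for x y
    unfolding phi_def vadd_def by (simp add: sum.distrib)
  have phi_c: "phi c = 0" unfolding c_def phi_add using I unfolding phi_def by simp
  have phi_sc: "phi (\<lambda>i. a * c i) = a * phi c" for a
    unfolding phi_def by (simp add: sum_distrib_left)
  have lin: "T (vadd x y) = vadd (T x) (T y)" for x y
    unfolding T_def phi_add unfolding vadd_def by (simp add: algebra_simps)
  have phiT: "phi (T x) = phi x" for x
    unfolding T_def phi_add phi_sc phi_c by simp
  have inv: "T (T x) = x" for x
  proof -
    have "T (T x) = vadd (vadd x (\<lambda>i. phi x * c i)) (\<lambda>i. phi x * c i)"
      unfolding T_def[of "T x"] phiT unfolding T_def ..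
    then show ?thesis by simp
  qed
  have cF: "c \<in> Fvec n" unfolding c_def using assms by auto
  have FT: "T x \<in> Fvec n" if "x \<in> Fvec n" for x
  proof -
    have "(\<lambda>i. phi x * c i) \<in> Fvec n" using cF unfolding Fvec_def by auto
    then show ?thesis unfolding T_def using that by auto
  qed
  have Tw: "T w = w'"
  proof -
    have "phi w = 1" using I unfolding phi_def by simp
    then have "T w = vadd w c" unfolding T_def by simp
    then show ?thesis unfolding c_def by simp
  qed
  have TT: "T ` T ` S = S" for S by (simp add: image_image inv)
  have "(\<lambda>U. T ` U) ` {U \<in> Subs n d. w \<in> U} = {U \<in> Subs n d. w' \<in> U}"
  proof
    show "(\<lambda>U. T ` U) ` {U \<in> Subs n d. w \<in> U} \<subseteq> {U \<in> Subs n d. w' \<in> U}"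
      using subspace_image[OF lin inv FT] Tw by blast
    show "{U \<in> Subs n d. w' \<in> U} \<subseteq> (\<lambda>U. T ` U) ` {U \<in> Subs n d. w \<in> U}"
    proof
      fix U assume U: "U \<in> {U \<in> Subs n d. w' \<in> U}"
      have "T ` U \<in> Subs n d" using subspace_image[OF lin inv FT] U by simp
      moreover have "w \<in> T ` U"
      proof (rule image_eqI)
        show "w = T w'" using Tw inv by metis
        show "w' \<in> U" using U by simp
      qed
      ultimately have "T ` U \<in> {U \<in> Subs n d. w \<in> U}" by simp
      then have "T ` T ` U \<in> (\<lambda>U. T ` U) ` {U \<in> Subs n d. w \<in> U}" by (rule imageI)
      then show "U \<in> (\<lambda>U. T ` U) ` {U \<in> Subs n d. w \<in> U}" by (simp only: TT)
    qed
  qed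
  moreover have "inj_on (\<lambda>U. T ` U) {U \<in> Subs n d. w \<in> U}"
  proof (rule inj_onI)
    fix U1 U2 assume "T ` U1 = T ` U2"
    then have "T ` T ` U1 = T ` T ` U2" by simp
    then show "U1 = U2" by (simp only: TT)
  qed
  ultimately show ?thesis using card_image by fastforce
qed


definition fA :: "(nat \<Rightarrow> bit) set \<Rightarrow> (nat \<Rightarrow> bit) \<Rightarrow> real" where
  "fA A y = (if y \<in> A then 1 else -1)"

definition SA :: "(nat \<Rightarrow> bit) set \<Rightarrow> (nat \<Rightarrow> bit) \<Rightarrow> (nat \<Rightarrow> bit) set \<Rightarrow> real" where
  "SA A x U = (\<Sum>u\<in>U. fA A (vadd x u))"

definition KA :: "nat \<Rightarrow> (nat \<Rightarrow> bit) set \<Rightarrow> (nat \<Rightarrow> bit) \<Rightarrow> real" where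
  "KA n A w = (\<Sum>x\<in>Fvec n. fA A x * fA A (vadd x w))"

lemma fA_sq[simp]: "fA A y * fA A y = 1"
  unfolding fA_def by simp

lemma shift_sum:
  assumes "finite X" "\<And>v. v \<in> X \<Longrightarrow> vadd v u \<in> X"
  shows "(\<Sum>v\<in>X. g (vadd v u)) = (\<Sum>v\<in>X. (g v :: real))"
proof -
  have "bij_betw (\<lambda>v. vadd v u) X X"
    unfolding bij_betw_def
  proof
    show "inj_on (\<lambda>v. vadd v u) X"
    proof (rule inj_onI)
      fix a b assume "vadd a u = vadd b u"
      then have "vadd (vadd a u) u = vadd (vadd b u) u" by simp
      then show "a = b" by simp
    qed
    show "(\<lambda>v. vadd v u) ` X = X"
    proof
      show "(\<lambda>v. vadd v u) ` X \<subseteq> X" using assms(2) by auto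
      show "X \<subseteq> (\<lambda>v. vadd v u) ` X"
      proof
        fix v assume "v \<in> X"
        then have "vadd v u \<in> X" "v = vadd (vadd v u) u" using assms(2) by auto
        then show "v \<in> (\<lambda>v. vadd v u) ` X" by blast
      qed
    qed
  qed
  then show ?thesis by (rule sum.reindex_bij_betw)
qed

lemma sq_sum_x:
  assumes U: "U \<in> Subs n d"
  shows "(\<Sum>x\<in>Fvec n. (SA A x U)^2) = 2 ^ d * (\<Sum>w\<in>U. KA n A w)"
proof -
  note P = subspace_props[OF U]
  have inner: "(\<Sum>x\<in>Fvec n. fA A (vadd x u) * fA A (vadd x v)) = KA n A (vadd u v)"
    if "u \<in> Fvec n" for u v
  proof -
    define g where "g y = fA A y * fA A (vadd (vadd y u) v)" for y
    have "(\<Sum>x\<in>Fvec n. fA A (vadd x u) * fA A (vadd x v)) = (\<Sum>x\<in>Fvec n. g (vadd x u))"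
      unfolding g_def by simp
    also have "\<dots> = (\<Sum>x\<in>Fvec n. g x)" by (rule shift_sum) (use that in auto)
    also have "\<dots> = KA n A (vadd u v)" unfolding KA_def g_def by (simp add: vadd_assoc)
    finally show ?thesis .
  qed
  have "(\<Sum>x\<in>Fvec n. (SA A x U)^2)
      = (\<Sum>x\<in>Fvec n. \<Sum>u\<in>U. \<Sum>v\<in>U. fA A (vadd x u) * fA A (vadd x v))"
    unfolding SA_def power2_eq_square sum_product ..
  also have "\<dots> = (\<Sum>u\<in>U. \<Sum>x\<in>Fvec n. \<Sum>v\<in>U. fA A (vadd x u) * fA A (vadd x v))"
    by (rule sum.swap)
  also have "\<dots> = (\<Sum>u\<in>U. \<Sum>v\<in>U. \<Sum>x\<in>Fvec n. fA A (vadd x u) * fA A (vadd x v))"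
    by (rule sum.cong[OF refl]) (rule sum.swap)
  also have "\<dots> = (\<Sum>u\<in>U. \<Sum>v\<in>U. KA n A (vadd u v))"
  proof (rule sum.cong[OF refl])
    fix u assume "u \<in> U"
    then have "u \<in> Fvec n" using P(1) by blast
    then show "(\<Sum>v\<in>U. \<Sum>x\<in>Fvec n. fA A (vadd x u) * fA A (vadd x v)) = (\<Sum>v\<in>U. KA n A (vadd u v))"
      using inner by simp
  qed
  also have "\<dots> = (\<Sum>u\<in>U. \<Sum>w\<in>U. KA n A w)"
  proof (rule sum.cong[OF refl])
    fix u assume u: "u \<in> U"
    have "(\<Sum>v\<in>U. KA n A (vadd v u)) = (\<Sum>v\<in>U. KA n A v)"
      by (rule shift_sum) (use P u in auto)
    then show "(\<Sum>v\<in>U. KA n A (vadd u v)) = (\<Sum>w\<in>U. KA n A w)" by (simp add: vadd_comm)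
  qed
  also have "\<dots> = 2 ^ d * (\<Sum>w\<in>U. KA n A w)" using P(3) by simp
  finally show ?thesis .
qed

lemma swap_count:
  "(\<Sum>U\<in>Subs n d. \<Sum>w\<in>U. h w) = (\<Sum>w\<in>Fvec n. (h w :: real) * real (card {U \<in> Subs n d. w \<in> U}))"
proof -
  have "(\<Sum>U\<in>Subs n d. \<Sum>w\<in>U. h w) = (\<Sum>U\<in>Subs n d. \<Sum>w\<in>Fvec n. if w \<in> U then h w else 0)"
  proof (rule sum.cong[OF refl])
    fix U assume "U \<in> Subs n d"
    then have "Fvec n \<inter> U = U" using subspace_props(1) by blast
    then show "(\<Sum>w\<in>U. h w) = (\<Sum>w\<in>Fvec n. if w \<in> U then h w else 0)"
      using sum.inter_restrict[of "Fvec n" h U] by simp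
  qed
  also have "\<dots> = (\<Sum>w\<in>Fvec n. \<Sum>U\<in>Subs n d. if w \<in> U then h w else 0)" by (rule sum.swap)
  also have "\<dots> = (\<Sum>w\<in>Fvec n. h w * real (card {U \<in> Subs n d. w \<in> U}))"
  proof (rule sum.cong[OF refl])
    fix w
    have "(\<Sum>U\<in>Subs n d. if w \<in> U then h w else 0) = (\<Sum>U\<in>{U \<in> Subs n d. w \<in> U}. h w)"
      using sum.inter_filter[of "Subs n d" "\<lambda>U. h w" "\<lambda>U. w \<in> U"] by simp
    then show "(\<Sum>U\<in>Subs n d. if w \<in> U then h w else 0) = h w * real (card {U \<in> Subs n d. w \<in> U})"
      by simp
  qed
  finally show ?thesis .
qed

lemma S_card:
  assumes "x \<in> Fvec n" "U \<in> Subs n d"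
  shows "SA A x U = 2 * real (card (fl (x, U) \<inter> A)) - 2 ^ d"
proof -
  have fin: "finite (fl (x, U))" unfolding fl_def using subspace_props(2)[OF assms(2)] by simp
  have c: "card (fl (x, U)) = 2 ^ d" by (rule card_fl[OF assms])
  have "SA A x U = (\<Sum>y\<in>fl (x, U). fA A y)"
    unfolding SA_def fl_def by (simp add: sum.reindex inj_on_subset[OF vadd_inj])
  also have "\<dots> = real (card (fl (x, U) \<inter> A)) - real (card (fl (x, U) - A))"
  proof -
    have "(\<Sum>y\<in>fl (x, U). fA A y) = (\<Sum>y\<in>fl (x, U) \<inter> {y. y \<in> A}. (1::real)) + (\<Sum>y\<in>fl (x, U) \<inter> - {y. y \<in> A}. (-1::real))"
      unfolding fA_def by (rule sum.If_cases[OF fin])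
    also have "\<dots> = real (card (fl (x, U) \<inter> A)) - real (card (fl (x, U) - A))"
      by (simp add: Diff_eq sum_constant)
    finally show ?thesis .
  qed
  also have "real (card (fl (x, U) - A)) = 2 ^ d - real (card (fl (x, U) \<inter> A))"
  proof -
    have "card (fl (x, U) - A) + card (fl (x, U) \<inter> A) = card (fl (x, U))"
      using fin by (metis Diff_Diff_Int Diff_subset card_Diff_subset card_mono add.commute
          finite_Diff inf_le1 le_add_diff_inverse)
    then show ?thesis using c by (simp add: algebra_simps flip: of_nat_add)
  qed
  finally show ?thesis by simp
qed


definition e0 :: "nat \<Rightarrow> bit" where "e0 = (\<lambda>i. if i = 0 then 1 else 0)"

lemma e0_Fvec: "0 < n \<Longrightarrow> e0 \<in> Fvec n"
  unfolding e0_def Fvec_def by auto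

lemma e0_nz: "e0 \<noteq> zv"
proof
  assume "e0 = zv"
  then have "e0 0 = zv 0" by simp
  then show False unfolding e0_def zv_def by simp
qed

lemma N_val:
  assumes "0 < n" "w \<in> Fvec n"
  shows "card {U \<in> Subs n d. w \<in> U} =
    (if w = zv then card (Subs n d) else card {U \<in> Subs n d. e0 \<in> U})"
proof (cases "w = zv")
  case True
  then have "{U \<in> Subs n d. w \<in> U} = Subs n d" using subspace_props(4) by blast
  then show ?thesis using True by simp
next
  case False
  then show ?thesis using N_sym[OF assms(2) e0_Fvec[OF assms(1)] False e0_nz] by simp
qed

lemma split_sum:
  assumes "0 < n"
  shows "(\<Sum>w\<in>Fvec n. h w * real (card {U \<in> Subs n d. w \<in> U}))
    = h zv * (real (card (Subs n d)) - real (card {U \<in> Subs n d. e0 \<in> U}))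
      + real (card {U \<in> Subs n d. e0 \<in> U}) * (\<Sum>w\<in>Fvec n. (h w :: real))"
proof -
  define M where "M = real (card (Subs n d))"
  define N1 where "N1 = real (card {U \<in> Subs n d. e0 \<in> U})"
  have "(\<Sum>w\<in>Fvec n. h w * real (card {U \<in> Subs n d. w \<in> U}))
      = h zv * M + (\<Sum>w\<in>Fvec n - {zv}. h w * real (card {U \<in> Subs n d. w \<in> U}))"
    using sum.remove[of "Fvec n" zv "\<lambda>w. h w * real (card {U \<in> Subs n d. w \<in> U})"]
      N_val[OF assms, of zv d] unfolding M_def by simp
  also have "(\<Sum>w\<in>Fvec n - {zv}. h w * real (card {U \<in> Subs n d. w \<in> U})) = (\<Sum>w\<in>Fvec n - {zv}. h w * N1)"
    by (rule sum.cong[OF refl]) (use N_val[OF assms] in \<open>auto simp: N1_def\<close>)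
  also have "\<dots> = N1 * (\<Sum>w\<in>Fvec n - {zv}. h w)" by (simp add: sum_distrib_left mult.commute)
  also have "(\<Sum>w\<in>Fvec n - {zv}. h w) = (\<Sum>w\<in>Fvec n. h w) - h zv"
    using sum.remove[of "Fvec n" zv h] by simp
  finally show ?thesis unfolding M_def[symmetric] N1_def[symmetric] by (simp add: algebra_simps)
qed

lemma sum_nonzero_ind:
  assumes "finite X" "zv \<in> X"
  shows "(\<Sum>w\<in>X. if w = zv then 0 else 1 :: real) = real (card X) - 1"
proof -
  have "(\<Sum>w\<in>X. if w = zv then 0 else 1 :: real) = 0 + (\<Sum>w\<in>X - {zv}. if w = zv then 0 else 1)"
    using sum.remove[OF assms, of "\<lambda>w. if w = zv then 0 else 1 :: real"] by simp
  also have "\<dots> = (\<Sum>w\<in>X - {zv}. 1)"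
    using sum.cong[of "X - {zv}" "X - {zv}" "\<lambda>w. if w = zv then 0 else 1 :: real" "\<lambda>_. 1"] by auto
  also have "\<dots> = real (card X) - 1"
  proof -
    have "card X \<ge> 1" using assms by (metis card_0_eq empty_iff less_one not_le)
    then show ?thesis using assms by (simp add: card_Diff_singleton of_nat_diff)
  qed
  finally show ?thesis .
qed

lemma count_rel:
  assumes "0 < n"
  shows "real (card {U \<in> Subs n d. e0 \<in> U}) * (2 ^ n - 1) = real (card (Subs n d)) * (2 ^ d - 1)"
proof -
  define h where "h w = (if w = zv then 0 else 1 :: real)" for w
  have "(\<Sum>U\<in>Subs n d. \<Sum>w\<in>U. h w) = (\<Sum>U\<in>Subs n d. 2 ^ d - 1)"
  proof (rule sum.cong[OF refl])
    fix U assume "U \<in> Subs n d"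
    note P = subspace_props[OF this]
    show "(\<Sum>w\<in>U. h w) = 2 ^ d - 1" unfolding h_def using sum_nonzero_ind[OF P(2) P(4)] P(3) by simp
  qed
  also have "\<dots> = real (card (Subs n d)) * (2 ^ d - 1)" by simp
  finally have 1: "(\<Sum>U\<in>Subs n d. \<Sum>w\<in>U. h w) = real (card (Subs n d)) * (2 ^ d - 1)" .
  have "(\<Sum>U\<in>Subs n d. \<Sum>w\<in>U. h w) = real (card {U \<in> Subs n d. e0 \<in> U}) * (\<Sum>w\<in>Fvec n. h w)"
    unfolding swap_count split_sum[OF assms] by (simp add: h_def)
  also have "(\<Sum>w\<in>Fvec n. h w) = 2 ^ n - 1" unfolding h_def
    using sum_nonzero_ind[OF finite_Fvec Fvec_zv, of n] by (simp add: card_Fvec)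
  finally show ?thesis using 1 by simp
qed

lemma KA_zv: "KA n A zv = 2 ^ n"
  unfolding KA_def by (simp add: card_Fvec)

lemma sum_KA: "(\<Sum>w\<in>Fvec n. KA n A w) = (\<Sum>x\<in>Fvec n. fA A x)^2"
proof -
  have "(\<Sum>w\<in>Fvec n. KA n A w) = (\<Sum>x\<in>Fvec n. \<Sum>w\<in>Fvec n. fA A x * fA A (vadd x w))"
    unfolding KA_def by (rule sum.swap)
  also have "\<dots> = (\<Sum>x\<in>Fvec n. fA A x * (\<Sum>w\<in>Fvec n. fA A (vadd w x)))"
    by (simp add: sum_distrib_left vadd_comm)
  also have "\<dots> = (\<Sum>x\<in>Fvec n. fA A x * (\<Sum>w\<in>Fvec n. fA A w))"
  proof (rule sum.cong[OF refl])
    fix x assume x: "x \<in> Fvec n"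
    have "(\<Sum>w\<in>Fvec n. fA A (vadd w x)) = (\<Sum>w\<in>Fvec n. fA A w)"
      by (rule shift_sum) (use x in auto)
    then show "fA A x * (\<Sum>w\<in>Fvec n. fA A (vadd w x)) = fA A x * (\<Sum>w\<in>Fvec n. fA A w)" by simp
  qed
  also have "\<dots> = (\<Sum>x\<in>Fvec n. fA A x)^2" by (simp add: power2_eq_square sum_distrib_right)
  finally show ?thesis .
qed

lemma total:
  assumes "0 < n"
  shows "(\<Sum>U\<in>Subs n d. \<Sum>x\<in>Fvec n. (SA A x U)^2)
    = 2 ^ d * (2 ^ n * (real (card (Subs n d)) - real (card {U \<in> Subs n d. e0 \<in> U}))
       + real (card {U \<in> Subs n d. e0 \<in> U}) * (\<Sum>x\<in>Fvec n. fA A x)^2)"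
proof -
  have "(\<Sum>U\<in>Subs n d. \<Sum>x\<in>Fvec n. (SA A x U)^2) = (\<Sum>U\<in>Subs n d. 2 ^ d * (\<Sum>w\<in>U. KA n A w))"
    by (rule sum.cong[OF refl]) (rule sq_sum_x)
  also have "\<dots> = 2 ^ d * (\<Sum>U\<in>Subs n d. \<Sum>w\<in>U. KA n A w)" by (simp add: sum_distrib_left)
  also have "\<dots> = 2 ^ d * (\<Sum>w\<in>Fvec n. KA n A w * real (card {U \<in> Subs n d. w \<in> U}))"
    unfolding swap_count ..
  also have "\<dots> = 2 ^ d * (2 ^ n * (real (card (Subs n d)) - real (card {U \<in> Subs n d. e0 \<in> U}))
       + real (card {U \<in> Subs n d. e0 \<in> U}) * (\<Sum>x\<in>Fvec n. fA A x)^2)"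
    unfolding split_sum[OF assms] KA_zv sum_KA ..
  finally show ?thesis .
qed


definition sig :: "nat \<Rightarrow> (nat \<Rightarrow> bit) \<Rightarrow> bit" where
  "sig n x = (\<Sum>i<n. x i)"

definition A0 :: "nat \<Rightarrow> (nat \<Rightarrow> bit) set" where
  "A0 n = {x \<in> Fvec n. sig n x = 0}"

lemma sig_add: "sig n (vadd x y) = sig n x + sig n y"
  unfolding sig_def vadd_def by (simp add: sum.distrib)

lemma fA_flip:
  assumes "y \<in> Fvec n" "w \<in> Fvec n" "sig n w = 1"
  shows "fA (A0 n) (vadd y w) = - fA (A0 n) y"
proof -
  have yw: "vadd y w \<in> Fvec n" using assms by auto
  show ?thesis
  proof (cases "sig n y = 0")
    case True
    then have "sig n (vadd y w) = 1" using assms(3) by (simp add: sig_add)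
    then show ?thesis using True assms yw unfolding fA_def A0_def by auto
  next
    case False
    then have "sig n y = 1" by simp
    then have "sig n (vadd y w) = 0" using assms(3) by (simp add: sig_add)
    then show ?thesis using False assms yw unfolding fA_def A0_def by auto
  qed
qed

lemma eq_S:
  assumes "x \<in> Fvec n" "U \<in> Subs n d"
  shows "(SA (A0 n) x U)^2 = (if SA (A0 n) x U = 0 then 0 else 4 ^ d)"
proof (cases "\<exists>w\<in>U. sig n w = 1")
  case True
  then obtain w where w: "w \<in> U" "sig n w = 1" by blast
  note P = subspace_props[OF assms(2)]
  have wF: "w \<in> Fvec n" using w P(1) by blast
  have "SA (A0 n) x U = (\<Sum>v\<in>U. fA (A0 n) (vadd x (vadd v w)))"
    unfolding SA_def using shift_sum[of U w "\<lambda>v. fA (A0 n) (vadd x v)"] P w by simp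
  also have "\<dots> = (\<Sum>v\<in>U. - fA (A0 n) (vadd x v))"
  proof (rule sum.cong[OF refl])
    fix v assume "v \<in> U"
    then have "vadd x v \<in> Fvec n" using P(1) assms(1) by blast
    then show "fA (A0 n) (vadd x (vadd v w)) = - fA (A0 n) (vadd x v)"
      using fA_flip[OF _ wF w(2)] by (simp flip: vadd_assoc)
  qed
  also have "\<dots> = - SA (A0 n) x U" unfolding SA_def by (simp add: sum_negf)
  finally have "SA (A0 n) x U = 0" by simp
  then show ?thesis by simp
next
  case False
  note P = subspace_props[OF assms(2)]
  have "fA (A0 n) (vadd x u) = fA (A0 n) x" if "u \<in> U" for u
  proof -
    have "sig n u = 0" using False that by auto
    moreover have "vadd x u \<in> Fvec n" using that P(1) assms(1) by blast
    ultimately show ?thesis using assms(1) unfolding fA_def A0_def by (simp add: sig_add)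
  qed
  then have "SA (A0 n) x U = 2 ^ d * fA (A0 n) x" unfolding SA_def using P(3) by simp
  moreover have "fA (A0 n) x = 1 \<or> fA (A0 n) x = -1" unfolding fA_def by simp
  ultimately show ?thesis by (auto simp: power2_eq_square power_mult_distrib
        simp flip: power_mult_distrib)
qed

lemma F0:
  assumes "0 < n"
  shows "(\<Sum>x\<in>Fvec n. fA (A0 n) x) = 0"
proof -
  have s: "sig n e0 = 1" unfolding sig_def e0_def using assms by (simp add: sum.delta)
  have "(\<Sum>x\<in>Fvec n. fA (A0 n) x) = (\<Sum>x\<in>Fvec n. fA (A0 n) (vadd x e0))"
    by (rule sym, rule shift_sum) (use e0_Fvec[OF assms] in auto)
  also have "\<dots> = (\<Sum>x\<in>Fvec n. - fA (A0 n) x)"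
    by (rule sum.cong[OF refl]) (rule fA_flip[OF _ e0_Fvec[OF assms] s])
  also have "\<dots> = - (\<Sum>x\<in>Fvec n. fA (A0 n) x)" by (simp add: sum_negf)
  finally show ?thesis by simp
qed

definition ee :: "nat \<Rightarrow> nat \<Rightarrow> bit" where "ee i = (\<lambda>j. if j = i then 1 else 0)"

lemma ee_inj: "inj ee"
proof (rule injI)
  fix i j assume "ee i = ee j"
  then have "ee i i = ee j i" by simp
  then show "i = j" unfolding ee_def by (cases "i = j") auto
qed

lemma Subs_nonempty:
  assumes "d \<le> n"
  shows "Subs n d \<noteq> {}"
proof -
  define B where "B = ee ` {..<d}"
  have vs: "vsum S j = (if ee j \<in> S then 1 else 0)" if SB: "S \<subseteq> B" for S j
  proof -
    have fin: "finite S" using SB finite_subset unfolding B_def by blast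
    have "vsum S j = (\<Sum>v\<in>S. if v = ee j then 1 else 0)" unfolding vsum_def
    proof (rule sum.cong[OF refl])
      fix v assume "v \<in> S"
      then obtain i where "v = ee i" using SB unfolding B_def by blast
      then show "v j = (if v = ee j then 1 else 0)" using ee_inj unfolding ee_def[of j]
        by (auto simp: ee_def inj_eq dest: fun_cong[of _ _ j])
    qed
    also have "\<dots> = (if ee j \<in> S then 1 else 0)" using fin by (simp add: sum.delta')
    finally show ?thesis .
  qed
  have "inj_on vsum (Pow B)"
  proof (rule inj_onI)
    fix S1 S2 assume S: "S1 \<in> Pow B" "S2 \<in> Pow B" and eq: "vsum S1 = vsum S2"
    have "ee j \<in> S1 \<longleftrightarrow> ee j \<in> S2" for j
      using fun_cong[OF eq, of j] vs[of S1 j] vs[of S2 j] S by (auto split: if_splits)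
    then show "S1 = S2" using S unfolding B_def by blast
  qed
  moreover have "B \<subseteq> Fvec n" unfolding B_def Fvec_def ee_def using assms by auto
  moreover have "finite B" "card B = d" unfolding B_def using ee_inj
    by (auto simp: card_image inj_on_subset)
  ultimately have "vsum ` Pow B \<in> Subs n d" unfolding Subs_def is_subspace_dim_def by blast
  then show ?thesis by blast
qed

lemma telescope:
  "d \<le> n \<Longrightarrow> (\<Prod>i<d. (2::real) ^ (n - 1 - i) - 1) * (2 ^ n - 1) = (\<Prod>i<d. (2::real) ^ (n - i) - 1) * (2 ^ (n - d) - 1)"
proof (induction d)
  case 0
  then show ?case by simp
next
  case (Suc d)
  then have IH: "(\<Prod>i<d. (2::real) ^ (n - 1 - i) - 1) * (2 ^ n - 1) = (\<Prod>i<d. (2::real) ^ (n - i) - 1) * (2 ^ (n - d) - 1)"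
    by simp
  have e: "n - 1 - d = n - Suc d" by simp
  have "(\<Prod>i<Suc d. (2::real) ^ (n - 1 - i) - 1) * (2 ^ n - 1)
      = ((\<Prod>i<d. (2::real) ^ (n - 1 - i) - 1) * (2 ^ n - 1)) * (2 ^ (n - Suc d) - 1)"
    by (simp add: e algebra_simps)
  also have "\<dots> = (\<Prod>i<Suc d. (2::real) ^ (n - i) - 1) * (2 ^ (n - Suc d) - 1)"
    unfolding IH by (simp add: algebra_simps)
  finally show ?case .
qed

lemma pow_m1_pos: "0 < k \<Longrightarrow> (2::real) ^ k - 1 > 0"
  by (simp add: one_less_power)

lemma gauss_ratio:
  assumes "d \<le> n" "0 < n"
  shows "gauss_binom (n - 1) d / gauss_binom n d = (2 ^ (n - d) - 1) / (2 ^ n - 1)"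
proof -
  define Q where "Q = (\<Prod>i<d. (2::real) ^ (d - i) - 1)"
  define P1 where "P1 = (\<Prod>i<d. (2::real) ^ (n - 1 - i) - 1)"
  define P2 where "P2 = (\<Prod>i<d. (2::real) ^ (n - i) - 1)"
  have Q: "Q > 0" unfolding Q_def by (rule prod_pos) (auto intro: pow_m1_pos)
  have P2: "P2 > 0" unfolding P2_def using assms by (intro prod_pos) (auto intro: pow_m1_pos)
  have g1: "gauss_binom (n - 1) d = P1 / Q" unfolding gauss_binom_def P1_def Q_def by (rule prod_dividef)
  have g2: "gauss_binom n d = P2 / Q" unfolding gauss_binom_def P2_def Q_def by (rule prod_dividef)
  have t: "P1 * (2 ^ n - 1) = P2 * (2 ^ (n - d) - 1)" unfolding P1_def P2_def by (rule telescope[OF assms(1)])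
  have an: "(2::real) ^ n - 1 > 0" using pow_m1_pos assms by blast
  show ?thesis unfolding g1 g2 using Q P2 an t by (simp add: field_simps)
qed


lemma lam_pairs:
  "lambda_star_A n d s A = real (card {p \<in> Fvec n \<times> Subs n d. card (fl p \<inter> A) = s})
      / real (card (Fvec n \<times> Subs n d))"
proof -
  have 1: "{Q. is_flat n d Q \<and> card (Q \<inter> A) = s} = {Q \<in> Flats n d. card (Q \<inter> A) = s}"
    unfolding Flats_def by auto
  have 2: "{Q. is_flat n d Q} = Flats n d" unfolding Flats_def by auto
  have c1: "real (card {p \<in> Fvec n \<times> Subs n d. card (fl p \<inter> A) = s})
      = real (card {Q \<in> Flats n d. card (Q \<inter> A) = s}) * 2 ^ d"
    using count_pairs[of n d "\<lambda>Q. card (Q \<inter> A) = s"] by simp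
  have c2: "real (card (Fvec n \<times> Subs n d)) = real (card (Flats n d)) * 2 ^ d"
    using count_pairs[of n d "\<lambda>Q. True"] by simp
  show ?thesis unfolding lambda_star_A_def 1 2 c1 c2 by simp
qed

lemma pair_sum:
  "(\<Sum>p\<in>Fvec n \<times> Subs n d. h (fst p) (snd p)) = (\<Sum>U\<in>Subs n d. \<Sum>x\<in>Fvec n. (h x U :: real))"
proof -
  have "(\<Sum>U\<in>Subs n d. \<Sum>x\<in>Fvec n. h x U) = (\<Sum>x\<in>Fvec n. \<Sum>U\<in>Subs n d. h x U)"
    by (rule sum.swap)
  also have "\<dots> = (\<Sum>p\<in>Fvec n \<times> Subs n d. case_prod h p)" by (rule sum.cartesian_product)
  finally show ?thesis by (simp add: case_prod_unfold)
qed

lemma core: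
  fixes n d :: nat and A :: "(nat \<Rightarrow> bit) set"
  assumes "1 \<le> d"
  defines "X \<equiv> Fvec n \<times> Subs n d"
  defines "Z \<equiv> {p \<in> X. card (fl p \<inter> A) = 2 ^ (d - 1)}"
  shows "(\<Sum>p\<in>X. (SA A (fst p) (snd p))^2) \<le> 4 ^ d * (real (card X) - real (card Z))"
    and "(\<And>p. p \<in> X \<Longrightarrow> (SA A (fst p) (snd p))^2 = (if SA A (fst p) (snd p) = 0 then 0 else 4 ^ d))
        \<Longrightarrow> (\<Sum>p\<in>X. (SA A (fst p) (snd p))^2) = 4 ^ d * (real (card X) - real (card Z))"
proof -
  have d2: "(2::real) ^ d = 2 * 2 ^ (d - 1)" using assms(1)
    by (metis Suc_diff_1 less_le_trans power_Suc zero_less_one)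
  have key: "p \<in> Z \<longleftrightarrow> SA A (fst p) (snd p) = 0" if p: "p \<in> X" for p
  proof -
    have xU: "fst p \<in> Fvec n" "snd p \<in> Subs n d" using p unfolding X_def by auto
    have "SA A (fst p) (snd p) = 2 * real (card (fl p \<inter> A)) - 2 ^ d"
      using S_card[OF xU] by simp
    then have "SA A (fst p) (snd p) = 0 \<longleftrightarrow> real (card (fl p \<inter> A)) = 2 ^ (d - 1)"
      using d2 by auto
    also have "\<dots> \<longleftrightarrow> card (fl p \<inter> A) = 2 ^ (d - 1)"
      by (metis of_nat_eq_iff of_nat_numeral of_nat_power)
    finally show ?thesis unfolding Z_def using p by auto
  qed
  have bnd: "(SA A (fst p) (snd p))^2 \<le> 4 ^ d" if p: "p \<in> X" for p
  proof -
    have xU: "fst p \<in> Fvec n" "snd p \<in> Subs n d" using p unfolding X_def by auto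
    have "card (fl p \<inter> A) \<le> card (fl p)"
      by (rule card_mono) (use xU subspace_props(2)[OF xU(2)] in \<open>auto simp: fl_def\<close>)
    also have "card (fl p) = 2 ^ d" using card_fl[OF xU] by simp
    finally have c: "real (card (fl p \<inter> A)) \<le> 2 ^ d"
      by (metis of_nat_le_iff of_nat_numeral of_nat_power)
    have e: "SA A (fst p) (snd p) = 2 * real (card (fl p \<inter> A)) - 2 ^ d"
      using S_card[OF xU] by simp
    have c0: "0 \<le> real (card (fl p \<inter> A))" by simp
    have "\<bar>SA A (fst p) (snd p)\<bar> \<le> 2 ^ d" unfolding e abs_le_iff using c c0 by linarith
    then have "\<bar>SA A (fst p) (snd p)\<bar>^2 \<le> (2 ^ d)^2" by (rule power_mono) simp
    moreover have "(4::real) ^ d = (2 ^ d)^2" by (simp add: power2_eq_square flip: power_mult_distrib)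
    ultimately show ?thesis by simp
  qed
  have ZX: "Z \<subseteq> X" "finite X" unfolding Z_def X_def by auto
  have cnt: "(\<Sum>p\<in>X. 4 ^ d * (if p \<in> Z then 0 else 1)) = 4 ^ d * (real (card X) - real (card Z))"
  proof -
    have "(\<Sum>p\<in>X. (if p \<in> Z then 0 else 1 :: real)) = (\<Sum>p\<in>X. (if p \<notin> Z then 1 else 0 :: real))"
      by (rule sum.cong) auto
    also have "\<dots> = (\<Sum>p\<in>{p \<in> X. p \<notin> Z}. 1)"
      using sum.inter_filter[OF ZX(2), of "\<lambda>_. 1::real" "\<lambda>p. p \<notin> Z"] by simp
    also have "\<dots> = (\<Sum>p\<in>X - Z. 1)"
    proof -
      have "{p \<in> X. p \<notin> Z} = X - Z" by blast
      then show ?thesis by simp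
    qed
    also have "\<dots> = real (card X) - real (card Z)"
      using ZX by (simp add: card_Diff_subset of_nat_diff card_mono finite_subset)
    finally have h: "(\<Sum>p\<in>X. (if p \<in> Z then 0 else 1 :: real)) = real (card X) - real (card Z)" .
    show ?thesis unfolding sum_distrib_left[symmetric] h ..
  qed
  show "(\<Sum>p\<in>X. (SA A (fst p) (snd p))^2) \<le> 4 ^ d * (real (card X) - real (card Z))"
  proof -
    have "(\<Sum>p\<in>X. (SA A (fst p) (snd p))^2) \<le> (\<Sum>p\<in>X. 4 ^ d * (if p \<in> Z then 0 else 1))"
    proof (rule sum_mono)
      fix p assume "p \<in> X"
      then show "(SA A (fst p) (snd p))^2 \<le> 4 ^ d * (if p \<in> Z then 0 else 1)"
        using key bnd by auto
    qed
    then show ?thesis using cnt by simp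
  qed
  assume H: "\<And>p. p \<in> X \<Longrightarrow> (SA A (fst p) (snd p))^2 = (if SA A (fst p) (snd p) = 0 then 0 else 4 ^ d)"
  have "(\<Sum>p\<in>X. (SA A (fst p) (snd p))^2) = (\<Sum>p\<in>X. 4 ^ d * (if p \<in> Z then 0 else 1))"
  proof (rule sum.cong[OF refl])
    fix p assume "p \<in> X"
    then show "(SA A (fst p) (snd p))^2 = 4 ^ d * (if p \<in> Z then 0 else 1)"
      using key H by auto
  qed
  then show "(\<Sum>p\<in>X. (SA A (fst p) (snd p))^2) = 4 ^ d * (real (card X) - real (card Z))"
    using cnt by simp
qed


lemma ineq_main:
  fixes n d :: nat and A :: "(nat \<Rightarrow> bit) set"
  assumes "1 < d" "d \<le> n"
  shows "lambda_star_A n d (2 ^ (d - 1)) A \<le> 1 - (2 ^ (n - d) - 1) / (2 ^ n - 1)"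
    and "lambda_star_A n d (2 ^ (d - 1)) (A0 n) = 1 - (2 ^ (n - d) - 1) / (2 ^ n - 1)"
proof -
  have n0: "0 < n" using assms by simp
  define X where "X = Fvec n \<times> Subs n d"
  define M where "M = real (card (Subs n d))"
  define N1 where "N1 = real (card {U \<in> Subs n d. e0 \<in> U})"
  define a where "a = (2::real) ^ d"
  define b where "b = (2::real) ^ n"
  have a0: "a > 0" and b0: "b > 0" unfolding a_def b_def by simp_all
  have M0: "M > 0" unfolding M_def using Subs_nonempty[OF assms(2)] finite_Subs[of n d]
    by (simp add: card_gt_0_iff)
  have N1M: "N1 \<le> M" unfolding N1_def M_def by (simp add: card_mono)
  have cX: "real (card X) = b * M" unfolding X_def b_def M_def by (simp add: card_cartesian_product card_Fvec)
  have rel: "N1 * (b - 1) = M * (a - 1)" unfolding N1_def M_def a_def b_def by (rule count_rel[OF n0])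
  have bab: "b = a * 2 ^ (n - d)" unfolding a_def b_def using assms(2) by (simp flip: power_add)
  have b1: "b - 1 > 0" unfolding b_def using n0 by (simp add: one_less_power)
  have tgt: "(2 ^ (n - d) - 1) / (2 ^ n - 1) = (M - N1) / (a * M)"
  proof -
    have "(M - N1) * (b - 1) = a * M * (2 ^ (n - d) - 1)"
      using rel bab by (simp add: algebra_simps)
    then show ?thesis using a0 M0 b1 unfolding b_def by (simp add: field_simps)
  qed
  have T: "(\<Sum>p\<in>X. (SA B (fst p) (snd p))^2)
      = a * (b * (M - N1) + N1 * (\<Sum>x\<in>Fvec n. fA B x)^2)" for B
    unfolding X_def pair_sum[of "\<lambda>x U. (SA B x U)^2"] total[OF n0] a_def b_def M_def N1_def ..
  have a4: "(4::real) ^ d = a * a" unfolding a_def by (simp flip: power_mult_distrib)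
  have fin: "lambda_star_A n d (2 ^ (d - 1)) B = c / (b * M)"
    if "c = real (card {p \<in> X. card (fl p \<inter> B) = 2 ^ (d - 1)})" for B c
    unfolding lam_pairs that cX[symmetric] X_def ..
  define cZ where "cZ = real (card {p \<in> X. card (fl p \<inter> A) = 2 ^ (d - 1)})"
  have "a * (b * (M - N1)) \<le> a * (b * (M - N1) + N1 * (\<Sum>x\<in>Fvec n. fA A x)^2)"
    using a0 N1M unfolding N1_def by (intro mult_left_mono) auto
  also have "\<dots> \<le> a * a * (b * M - cZ)"
    using core(1)[where n=n and d=d and A=A] assms unfolding T[symmetric] cZ_def a4 cX[symmetric] X_def by simp
  finally have h0: "a * (b * (M - N1)) \<le> a * (a * (b * M - cZ))" by (simp add: mult.assoc)
  then have h1: "b * (M - N1) \<le> a * (b * M - cZ)" using a0 by simp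
  have "cZ / (b * M) \<le> 1 - (M - N1) / (a * M)"
  proof -
    have "M * b + a * cZ \<le> N1 * b + M * (a * b)" using h1 by (simp add: algebra_simps)
    then show ?thesis using a0 b0 M0 by (simp add: field_simps)
  qed
  then show "lambda_star_A n d (2 ^ (d - 1)) A \<le> 1 - (2 ^ (n - d) - 1) / (2 ^ n - 1)"
    unfolding tgt using fin[OF cZ_def] by simp
  define cZ0 where "cZ0 = real (card {p \<in> X. card (fl p \<inter> A0 n) = 2 ^ (d - 1)})"
  have "a * (b * (M - N1)) = a * (b * (M - N1) + N1 * (\<Sum>x\<in>Fvec n. fA (A0 n) x)^2)"
    using F0[OF n0] by simp
  also have "\<dots> = a * a * (b * M - cZ0)"
  proof -
    have H: "(SA (A0 n) (fst p) (snd p))^2 = (if SA (A0 n) (fst p) (snd p) = 0 then 0 else 4 ^ d)"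
      if "p \<in> Fvec n \<times> Subs n d" for p
    proof -
      have "fst p \<in> Fvec n" "snd p \<in> Subs n d" using that by auto
      then show ?thesis by (rule eq_S)
    qed
    have E: "(\<Sum>p\<in>Fvec n \<times> Subs n d. (SA (A0 n) (fst p) (snd p))^2) = 4 ^ d *
        (real (card (Fvec n \<times> Subs n d)) - real (card {p \<in> Fvec n \<times> Subs n d. card (fl p \<inter> A0 n) = 2 ^ (d - 1)}))"
      by (rule core(2)[where n=n and d=d and A="A0 n"]) (use assms H in auto)
    show ?thesis using E T[of "A0 n"] unfolding X_def cZ0_def a4 cX[unfolded X_def] by simp
  qed
  finally have h0: "a * (b * (M - N1)) = a * (a * (b * M - cZ0))" by (simp add: mult.assoc)
  then have h1: "b * (M - N1) = a * (b * M - cZ0)" using a0 by simp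
  have "cZ0 / (b * M) = 1 - (M - N1) / (a * M)"
  proof -
    have "M * b + a * cZ0 = N1 * b + M * (a * b)" using h1 by (simp add: algebra_simps)
    then show ?thesis using a0 b0 M0 by (simp add: field_simps)
  qed
  then show "lambda_star_A n d (2 ^ (d - 1)) (A0 n) = 1 - (2 ^ (n - d) - 1) / (2 ^ n - 1)"
    unfolding tgt using fin[OF cZ0_def] by simp
qed


lemma lsn:
  assumes "1 < d" "d \<le> m"
  shows "lambda_star_n m d (2 ^ (d - 1)) = 1 - (2 ^ (m - d) - 1) / (2 ^ m - 1)"
  unfolding lambda_star_n_def
proof (rule Max_eqI)
  show "finite ((\<lambda>A. lambda_star_A m d (2 ^ (d - 1)) A) ` Pow (Fvec m))" by simp
  fix y assume "y \<in> (\<lambda>A. lambda_star_A m d (2 ^ (d - 1)) A) ` Pow (Fvec m)"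
  then obtain A where "y = lambda_star_A m d (2 ^ (d - 1)) A" by blast
  then show "y \<le> 1 - (2 ^ (m - d) - 1) / (2 ^ m - 1)" using ineq_main(1)[OF assms] by simp
next
  have "A0 m \<in> Pow (Fvec m)" unfolding A0_def by auto
  then show "1 - (2 ^ (m - d) - 1) / (2 ^ m - 1) \<in> (\<lambda>A. lambda_star_A m d (2 ^ (d - 1)) A) ` Pow (Fvec m)"
    using ineq_main(2)[OF assms] by (metis image_eqI)
qed

lemma alg_id:
  fixes x y :: real
  assumes "x > 1" "y > 0"
  shows "1 - (x / y - 1) / (x - 1) = (1 - 1 / y) + (1 - 1 / y) * ((1 / x) / (1 - 1 / x))"
  using assms by (simp add: field_simps)

lemma lim_part:
  fixes d :: nat
  assumes "1 \<le> d"
  shows "(\<lambda>m. 1 - (2 ^ (m - d) - 1) / (2 ^ m - 1) :: real) \<longlonglongrightarrow> 1 - 1 / 2 ^ d"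
proof -
  have L1: "(\<lambda>m. (1 / 2 :: real) ^ m) \<longlonglongrightarrow> 0" by (rule LIMSEQ_power_zero) simp
  have L2: "(\<lambda>m. (1 / 2 :: real) ^ m / (1 - (1 / 2) ^ m)) \<longlonglongrightarrow> 0 / (1 - 0)"
    by (intro tendsto_divide L1 tendsto_diff tendsto_const) simp
  have L3: "(\<lambda>m. (1 - 1 / 2 ^ d) + (1 - 1 / 2 ^ d) * ((1 / 2 :: real) ^ m / (1 - (1 / 2) ^ m)))
      \<longlonglongrightarrow> (1 - 1 / 2 ^ d) + (1 - 1 / 2 ^ d) * 0"
    using L2 by (intro tendsto_add tendsto_mult tendsto_const) simp_all
  have ev: "\<forall>\<^sub>F m in sequentially. (1 - 1 / 2 ^ d) + (1 - 1 / 2 ^ d) * ((1 / 2 :: real) ^ m / (1 - (1 / 2) ^ m))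
      = 1 - (2 ^ (m - d) - 1) / (2 ^ m - 1)"
  proof (rule eventually_sequentiallyI[of d])
    fix m assume m: "d \<le> m"
    have x: "(2::real) ^ m > 1" using m assms by (simp add: one_less_power)
    have "(2::real) ^ (m - d) = 2 ^ m / 2 ^ d" using m by (simp add: power_diff)
    moreover have "(1 / 2 :: real) ^ m = 1 / 2 ^ m" by (simp add: power_one_over)
    ultimately show "(1 - 1 / 2 ^ d) + (1 - 1 / 2 ^ d) * ((1 / 2 :: real) ^ m / (1 - (1 / 2) ^ m))
      = 1 - (2 ^ (m - d) - 1) / (2 ^ m - 1)" using alg_id[OF x, of "2 ^ d"] by simp
  qed
  show ?thesis using Lim_transform_eventually[OF L3 ev] by simp
qed

theorem lemma3p1:
  fixes n d :: nat
  assumes "d > 1" and "n \<ge> d"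
  shows "(\<forall>A \<subseteq> Fvec n.
            lambda_star_A n d (2 ^ (d - 1)) A \<le> 1 - gauss_binom (n - 1) d / gauss_binom n d)
       \<and> lambda_star_A n d (2 ^ (d - 1)) {x \<in> Fvec n. (\<Sum>i<n. x i) = 0}
            = 1 - gauss_binom (n - 1) d / gauss_binom n d
       \<and> (\<lambda>m. lambda_star_n m d (2 ^ (d - 1))) \<longlonglongrightarrow> 1 - 1 / 2 ^ d
       \<and> lambda_star d (2 ^ (d - 1)) = 1 - 1 / 2 ^ d"
proof -
  have n0: "0 < n" using assms by simp
  have g: "gauss_binom (n - 1) d / gauss_binom n d = (2 ^ (n - d) - 1) / (2 ^ n - 1)"
    by (rule gauss_ratio[OF assms(2) n0])
  have A: "{x \<in> Fvec n. (\<Sum>i<n. x i) = 0} = A0 n" unfolding A0_def sig_def ..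
  have lim: "(\<lambda>m. lambda_star_n m d (2 ^ (d - 1))) \<longlonglongrightarrow> 1 - 1 / 2 ^ d"
  proof (rule Lim_transform_eventually[OF lim_part])
    show "1 \<le> d" using assms by simp
    show "\<forall>\<^sub>F m in sequentially. 1 - (2 ^ (m - d) - 1) / (2 ^ m - 1) = lambda_star_n m d (2 ^ (d - 1))"
      by (rule eventually_sequentiallyI[of d]) (use lsn[OF assms(1)] in simp)
  qed
  show ?thesis
    unfolding g A using ineq_main[OF assms(1,2)] lim limI[OF lim] unfolding lambda_star_def
    by blast
qed

end
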